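(* Let $A, B \in M_n(\mathbb{C})$ be such that the map $\gamma_1 : \mathrm{Sp}(e^A) \times \mathrm{Sp}(e^B) \to \mathbb{C}$, $(\lambda,\mu) \mapsto \lambda\mu$, is injective, and such that either (i) $e^{kA+lB} = e^{kA}e^{lB}$ for all $(k,l)\in\mathbb{Z}^2$, or (ii) $e^{kA+B} = e^{kA}e^{B} = e^{B}e^{kA}$ for all $k \in \mathbb{N}$. Then every characteristic subspace of $e^A$ and every characteristic subspace of $e^B$ is invariant under both $A$ and $B$.
   Context: $e^M$ denotes the matrix exponential; $\mathrm{Sp}(M)$ is the set of eigenvalues of $M$; $\mathbb{N}$ is the set of non-negative integers. For $M \in M_n(\mathbb{C})$ and $\lambda \in \mathbb{C}$, the characteristic subspace of $M$ for $\lambda$ is $\ker (M - \lambda I_n)^n$. *)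

theory Defs
  imports "HOL-Analysis.Analysis"
begin

primrec mpow :: "complex^'n^'n \<Rightarrow> nat \<Rightarrow> complex^'n^'n" where
  "mpow M 0 = mat 1"
| "mpow M (Suc k) = M ** mpow M k"

definition mat_exp :: "complex^'n^'n \<Rightarrow> complex^'n^'n" where
  "mat_exp M = (\<Sum>k. (1 / fact k) *\<^sub>R mpow M k)"

definition mat_spectrum :: "complex^'n^'n \<Rightarrow> complex set" where
  "mat_spectrum M = {c. \<exists>v. v \<noteq> 0 \<and> M *v v = c *s v}"

definition char_subspace :: "complex^'n^'n \<Rightarrow> complex \<Rightarrow> (complex^'n) set" where
  "char_subspace M c = {v. mpow (M - mat c) CARD('n) *v v = 0}"

end

theory Submission imports Defs "HOL-Computational_Algebra.Fundamental_Theorem_Algebra"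
begin


lemma mat_comm: "(mat a :: 'a::comm_ring_1^'n^'n) ** M = M ** mat a"
  by (simp add: vec_eq_iff matrix_matrix_mult_def mat_def if_distrib[where f="\<lambda>x. x * _"] if_distrib[where f="\<lambda>x. _ * x"] mult.commute cong: if_cong)

lemma mat_vec: "(mat a :: 'a::comm_ring_1^'n^'n) *v v = a *s v"
  by (simp add: vec_eq_iff matrix_vector_mult_def mat_def if_distrib[where f="\<lambda>x. x * _"] cong: if_cong)

lemma mat_mult_mat: "(mat a :: 'a::comm_ring_1^'n^'n) ** mat b = mat (a * b)"
  by (simp add: vec_eq_iff matrix_matrix_mult_def mat_def if_distrib[where f="\<lambda>x. x * _"] cong: if_cong)

lemma matrix_sub_ldistrib: "(A::'a::ring_1^'n^'m) ** (B - C) = A ** B - A ** C"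
  by (simp add: vec_eq_iff matrix_matrix_mult_def sum_subtractf right_diff_distrib)

lemma matrix_sub_rdistrib: "((B - C)::'a::ring_1^'n^'m) ** A = B ** A - C ** A"
  by (simp add: vec_eq_iff matrix_matrix_mult_def sum_subtractf left_diff_distrib)

lemma matrix_add_rdistrib': "((B + C)::'a::semiring_1^'n^'m) ** A = B ** A + C ** A"
  by (simp add: vec_eq_iff matrix_matrix_mult_def sum.distrib distrib_right)

lemma mv_scale: "(A::'a::comm_ring_1^'n^'m) *v (c *s x) = c *s (A *v x)"
  by (simp add: vec_eq_iff matrix_vector_mult_def sum_distrib_left mult_ac)

lemma mv_sum: "(A::'a::comm_ring_1^'n^'m) *v (\<Sum>i\<in>I. f i) = (\<Sum>i\<in>I. A *v f i)"
  by (induction I rule: infinite_finite_induct) (simp_all add: matrix_vector_right_distrib)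

lemma mpow_add: "mpow M (a + b) = mpow M a ** mpow M b"
  by (induction a) (simp_all add: matrix_mul_assoc)

lemma mpow_Suc': "mpow M (Suc k) = mpow M k ** M"
  using mpow_add[of M k 1] by simp

lemma mv_Suc: "mpow M (Suc k) *v v = mpow M k *v (M *v v)"
  by (simp only: mpow_Suc' matrix_vector_mul_assoc)

lemma mv_Suc2: "mpow M (Suc k) *v v = M *v (mpow M k *v v)"
  by (simp add: matrix_vector_mul_assoc)

lemma comm_mpow: "S ** M = M ** S \<Longrightarrow> S ** mpow M k = mpow M k ** S"
  by (induction k) (simp_all add: matrix_mul_assoc, metis matrix_mul_assoc)

lemma comm_sub: "(S::'a::comm_ring_1^'n^'n) ** M = M ** S \<Longrightarrow> S ** (M - mat a) = (M - mat a) ** S"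
  by (simp add: matrix_sub_ldistrib matrix_sub_rdistrib mat_comm)

lemma comm_vec: "S ** M = M ** S \<Longrightarrow> S *v (M *v v) = M *v (S *v v)"
  by (simp add: matrix_vector_mul_assoc)

lemma mpow_mult_comm: "A ** B = B ** A \<Longrightarrow> mpow (A ** B) k = mpow A k ** mpow B k"
proof (induction k)
  case 0 then show ?case by simp
next
  case (Suc k)
  have c: "B ** mpow A k = mpow A k ** B"
    using comm_mpow[of B A k] Suc.prems by simp
  have "mpow (A ** B) (Suc k) = A ** (B ** mpow A k) ** mpow B k"
    using Suc by (simp add: matrix_mul_assoc)
  also have "\<dots> = mpow A (Suc k) ** mpow B (Suc k)"
    by (simp add: c matrix_mul_assoc)
  finally show ?case .
qed

lemma comm4:
  assumes "A ** C = C ** A" "A ** D = D ** A" "B ** C = C ** B" "B ** D = D ** B"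
  shows "(A ** B) ** (C ** D) = (C ** D) ** (A ** B)"
proof -
  have "(A ** B) ** (C ** D) = A ** (B ** C) ** D" by (simp add: matrix_mul_assoc)
  also have "\<dots> = (A ** C) ** (B ** D)" by (simp add: assms(3) matrix_mul_assoc)
  also have "\<dots> = (C ** A) ** (D ** B)" by (simp only: assms(1) assms(4))
  also have "\<dots> = C ** (A ** D) ** B" by (simp add: matrix_mul_assoc)
  also have "\<dots> = C ** (D ** A) ** B" by (simp only: assms(2))
  also have "\<dots> = (C ** D) ** (A ** B)" by (simp add: matrix_mul_assoc)
  finally show ?thesis .
qed

lemma mpow_mono_ker: "a \<le> b \<Longrightarrow> mpow T a *v x = 0 \<Longrightarrow> mpow T b *v x = 0"
  using mpow_add[of T "b - a" a] by (simp flip: matrix_vector_mul_assoc)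

section \<open>Dimension arguments\<close>

lemma chain_stab:
  fixes C :: "nat \<Rightarrow> (complex^'n) set"
  assumes sub: "\<And>k. vec.subspace (C k)" and mono: "\<And>k. C k \<subseteq> C (Suc k)"
  shows "\<exists>k\<le>CARD('n). C (Suc k) \<subseteq> C k"
proof (rule ccontr)
  assume "\<not> ?thesis"
  hence ps: "\<And>k. k \<le> CARD('n) \<Longrightarrow> C k \<subset> C (Suc k)" using mono by blast
  have "k \<le> Suc CARD('n) \<Longrightarrow> k \<le> vec.dim (C k)" for k
  proof (induction k)
    case 0 then show ?case by simp
  next
    case (Suc k)
    have e1: "vec.span (C k) = C k" using sub vec.span_eq_iff by blast
    have e2: "vec.span (C (Suc k)) = C (Suc k)" using sub vec.span_eq_iff by blast
    have "vec.span (C k) \<subset> vec.span (C (Suc k))" unfolding e1 e2 using ps[of k] Suc.prems by simp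
    hence "vec.dim (C k) < vec.dim (C (Suc k))" by (rule vec.dim_psubset)
    with Suc show ?case by simp
  qed
  from this[of "Suc CARD('n)"] dim_subset_UNIV_cart_gen[of "C (Suc CARD('n))"] show False by simp
qed

lemma ker_stab:
  fixes T :: "complex^'n^'n"
  assumes "mpow T m *v x = 0" shows "mpow T CARD('n) *v x = 0"
proof -
  define C where "C k = {x. mpow T k *v x = 0}" for k
  have sub: "vec.subspace (C k)" for k
    by (auto simp: C_def vec.subspace_def matrix_vector_right_distrib mv_scale)
  have mono: "C k \<subseteq> C (Suc k)" for k
    by (auto simp flip: matrix_vector_mul_assoc simp: C_def)
  obtain k where k: "k \<le> CARD('n)" "C (Suc k) \<subseteq> C k" using chain_stab[of C, OF sub mono] by blast
  have "C (k + j) \<subseteq> C k" for j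
  proof (induction j)
    case 0 then show ?case by simp
  next
    case (Suc j)
    show ?case
    proof
      fix x assume "x \<in> C (k + Suc j)"
      hence "T *v x \<in> C (k + j)" by (simp add: C_def mv_Suc del: mpow.simps)
      hence "T *v x \<in> C k" using Suc by blast
      hence "x \<in> C (Suc k)" by (simp add: C_def mv_Suc del: mpow.simps)
      thus "x \<in> C k" using k by blast
    qed
  qed
  moreover have "x \<in> C (k + m)" using assms mpow_mono_ker[of m "k + m" T x] by (simp add: C_def)
  ultimately have "x \<in> C k" by blast
  thus ?thesis using mpow_mono_ker[OF k(1)] by (simp add: C_def)
qed

lemma span_coeffs:
  fixes f :: "'i \<Rightarrow> complex^'n"
  assumes "y \<in> vec.span (f ` I)" "finite I"
  shows "\<exists>a. y = (\<Sum>i\<in>I. a i *s f i)"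
proof -
  have sub: "vec.subspace {y. \<exists>a. y = (\<Sum>i\<in>I. a i *s f i)}"
    unfolding vec.subspace_def
  proof (intro conjI allI ballI impI)
    show "0 \<in> {y. \<exists>a. y = (\<Sum>i\<in>I. a i *s f i)}"
      by (auto intro!: exI[of _ "\<lambda>_. 0"])
  next
    fix x y assume "x \<in> {y. \<exists>a. y = (\<Sum>i\<in>I. a i *s f i)}" "y \<in> {y. \<exists>a. y = (\<Sum>i\<in>I. a i *s f i)}"
    then obtain a b where "x = (\<Sum>i\<in>I. a i *s f i)" "y = (\<Sum>i\<in>I. b i *s f i)" by blast
    thus "x + y \<in> {y. \<exists>a. y = (\<Sum>i\<in>I. a i *s f i)}"
      by (auto intro!: exI[of _ "\<lambda>i. a i + b i"] simp: vec.scale_left_distrib sum.distrib)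
  next
    fix c x assume "x \<in> {y. \<exists>a. y = (\<Sum>i\<in>I. a i *s f i)}"
    then obtain a where "x = (\<Sum>i\<in>I. a i *s f i)" by blast
    thus "c *s x \<in> {y. \<exists>a. y = (\<Sum>i\<in>I. a i *s f i)}"
      by (auto intro!: exI[of _ "\<lambda>i. c * a i"] simp: vec.scale_sum_right)
  qed
  have base: "x \<in> {y. \<exists>a. y = (\<Sum>i\<in>I. a i *s f i)}" if xI: "x \<in> f ` I" for x
  proof -
    obtain j where j: "j \<in> I" "x = f j" using xI by blast
    have "(\<Sum>i\<in>I. (if i = j then 1 else 0) *s f i) = (\<Sum>i\<in>I. if i = j then f i else 0)"
      by (rule sum.cong) auto
    also have "\<dots> = x" using j assms(2) by simp
    finally show ?thesis by (auto intro!: exI[of _ "\<lambda>i. if i = j then 1 else 0"])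
  qed
  show ?thesis using vec.span_induct[OF assms(1) sub] base by blast
qed

lemma krylov:
  fixes S :: "complex^'n^'n"
  shows "\<exists>k a. mpow S k *v x = (\<Sum>j<k. a j *s (mpow S j *v x))"
proof -
  define C where "C k = vec.span ((\<lambda>j. mpow S j *v x) ` {..<k})" for k
  have sub: "vec.subspace (C k)" for k unfolding C_def by (rule vec.subspace_span)
  have mono: "C k \<subseteq> C (Suc k)" for k unfolding C_def
    by (intro vec.span_mono image_mono) auto
  obtain k where k: "C (Suc k) \<subseteq> C k" using chain_stab[of C, OF sub mono] by blast
  have "mpow S k *v x \<in> C (Suc k)" unfolding C_def by (intro vec.span_base) auto
  with k have "mpow S k *v x \<in> C k" by blast
  thus ?thesis unfolding C_def using span_coeffs[of _ "\<lambda>j. mpow S j *v x" "{..<k}"] by blast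
qed




definition pev :: "complex^'n^'n \<Rightarrow> complex poly \<Rightarrow> complex^'n \<Rightarrow> complex^'n" where
  "pev S p v = (\<Sum>i<Suc (degree p). coeff p i *s (mpow S i *v v))"

lemma pev_bound: "degree p < m \<Longrightarrow> pev S p v = (\<Sum>i<m. coeff p i *s (mpow S i *v v))"
  unfolding pev_def by (rule sum.mono_neutral_left) (auto simp: coeff_eq_0)

lemma pev_add: "pev S (p + q) v = pev S p v + pev S q v"
proof -
  define m where "m = Suc (max (degree p) (degree q))"
  have "degree (p + q) < m" using degree_add_le_max[of p q] by (simp add: m_def)
  thus ?thesis
    by (simp add: pev_bound[of _ m] m_def vec.scale_left_distrib sum.distrib)
qed

lemma pev_diff: "pev S (p - q) v = pev S p v - pev S q v"
proof -
  define m where "m = Suc (max (degree p) (degree q))"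
  have "degree (p - q) < m" using degree_diff_le_max[of p q] by (simp add: m_def)
  thus ?thesis
    by (simp add: pev_bound[of _ m] m_def vec.scale_left_diff_distrib sum_subtractf)
qed

lemma pev_smult: "pev S (smult c p) v = c *s pev S p v"
proof -
  have "degree (smult c p) < Suc (degree p)" using degree_smult_le[of c p] by simp
  thus ?thesis
    by (simp add: pev_bound[of _ "Suc (degree p)"] vec.scale_sum_right)
qed

lemma pev_monom: "pev S (monom c j) v = c *s (mpow S j *v v)"
proof -
  have "degree (monom c j) < Suc j" using degree_monom_le[of c j] by simp
  hence "pev S (monom c j) v = (\<Sum>i<Suc j. coeff (monom c j) i *s (mpow S i *v v))"
    by (rule pev_bound)
  also have "\<dots> = (\<Sum>i<Suc j. if i = j then c *s (mpow S i *v v) else 0)"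
    by (rule sum.cong) (auto simp: coeff_monom)
  also have "\<dots> = c *s (mpow S j *v v)" by simp
  finally show ?thesis .
qed

lemma pev_zero: "pev S 0 v = 0"
  by (simp add: pev_def)

lemma pev_sum: "finite J \<Longrightarrow> pev S (\<Sum>j\<in>J. p j) v = (\<Sum>j\<in>J. pev S (p j) v)"
  by (induction J rule: finite_induct) (simp_all add: pev_zero pev_add)

lemma pev_one: "pev S 1 v = v"
  by (simp add: pev_def)

lemma pev_pCons: "pev S (pCons a p) v = a *s v + pev S p (S *v v)"
proof -
  have d: "degree (pCons a p) < Suc (Suc (degree p))" by (simp add: degree_pCons_le le_imp_less_Suc)
  have "pev S (pCons a p) v = (\<Sum>i<Suc (Suc (degree p)). coeff (pCons a p) i *s (mpow S i *v v))"
    by (rule pev_bound[OF d])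
  also have "\<dots> = a *s v + (\<Sum>i<Suc (degree p). coeff p i *s (mpow S (Suc i) *v v))"
    by (subst sum.lessThan_Suc_shift) simp
  also have "(\<Sum>i<Suc (degree p). coeff p i *s (mpow S (Suc i) *v v)) = pev S p (S *v v)"
    unfolding pev_def by (simp add: mv_Suc del: mpow.simps)
  finally show ?thesis .
qed

lemma pev_vadd: "pev S p (u + w) = pev S p u + pev S p w"
  by (simp add: pev_def matrix_vector_right_distrib vec.scale_right_distrib sum.distrib)

lemma pev_vscale: "pev S p (c *s u) = c *s pev S p u"
  by (simp add: pev_def mv_scale vec.scale_sum_right mult.commute)

lemma pev_lin_factor: "pev S (p * [:-z, 1:]) v = pev S p ((S - mat z) *v v)"
proof -
  have e: "p * [:-z, 1:] = smult (-z) p + pCons 0 p"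
    by (simp add: mult_pCons_right)
  have v: "(S - mat z) *v v = S *v v + (-z) *s v"
    by (simp add: matrix_vector_mult_diff_rdistrib mat_vec)
  show ?thesis
    unfolding e v pev_add pev_smult pev_pCons pev_vadd pev_vscale by simp
qed

lemma annihilate:
  fixes S :: "complex^'n^'n"
  shows "\<exists>zs. pev S (\<Prod>z\<leftarrow>zs. [:-z, 1:]) x = 0"
proof -
  obtain k a where ka: "mpow S k *v x = (\<Sum>j<k. a j *s (mpow S j *v x))" using krylov by blast
  define q where "q = monom 1 k - (\<Sum>j<k. monom (a j) j)"
  have q0: "pev S q x = 0" by (simp add: q_def pev_diff pev_sum pev_monom ka)
  have "coeff q k = 1" by (simp add: q_def coeff_sum coeff_monom)
  hence "q \<noteq> 0" by auto
  hence lc: "lead_coeff q \<noteq> 0" by simp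
  obtain rs where rs: "mset rs = proots q" using ex_mset by blast
  have "q = smult (lead_coeff q) (\<Prod>x\<in>#proots q. [:-x, 1:])"
    using complex_poly_decompose_multiset[of q] by simp
  also have "(\<Prod>x\<in>#proots q. [:-x, 1:]) = (\<Prod>x\<leftarrow>rs. [:-x, 1:])"
    by (simp flip: rs prod_mset_prod_list)
  finally have "pev S q x = lead_coeff q *s pev S (\<Prod>x\<leftarrow>rs. [:-x, 1:]) x"
    by (metis pev_smult)
  with q0 lc show ?thesis by (auto simp: vec.scale_eq_0_iff)
qed




section \<open>Characteristic subspaces\<close>

lemma cs_iff: "v \<in> char_subspace T r \<longleftrightarrow> mpow (T - mat r) CARD('n) *v v = 0"
  for T :: "complex^'n^'n"
  by (simp add: char_subspace_def)

lemma cs_0: "0 \<in> char_subspace T r"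
  by (simp add: cs_iff)

lemma cs_add: "u \<in> char_subspace T r \<Longrightarrow> w \<in> char_subspace T r \<Longrightarrow> u + w \<in> char_subspace T r"
  by (simp add: cs_iff matrix_vector_right_distrib)

lemma cs_diff: "u \<in> char_subspace T r \<Longrightarrow> w \<in> char_subspace T r \<Longrightarrow> u - w \<in> char_subspace T r"
  by (simp add: cs_iff matrix_vector_mult_diff_distrib)

lemma cs_scale: "u \<in> char_subspace T r \<Longrightarrow> c *s u \<in> char_subspace T r"
  by (simp add: cs_iff mv_scale)

lemma cs_sum: "(\<And>i. i \<in> I \<Longrightarrow> f i \<in> char_subspace T r) \<Longrightarrow> (\<Sum>i\<in>I. f i) \<in> char_subspace T r"
  by (simp add: cs_iff mv_sum)

lemma comm_cs_pow: "S ** T = T ** S \<Longrightarrow> S ** mpow (T - mat r) k = mpow (T - mat r) k ** S"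
  for S T :: "complex^'n^'n"
  by (intro comm_mpow comm_sub)

lemma comm_cs_pow': "S ** T = T ** S \<Longrightarrow> mpow (T - mat r) k ** S = S ** mpow (T - mat r) k"
  for S T :: "complex^'n^'n"
  by (metis comm_cs_pow)

lemma cs_inv: "S ** T = T ** S \<Longrightarrow> v \<in> char_subspace T r \<Longrightarrow> S *v v \<in> char_subspace T r"
  for S T :: "complex^'n^'n"
  using comm_cs_pow[of S T r "CARD('n)"]
  by (simp add: cs_iff matrix_vector_mul_assoc) (metis matrix_vector_mul_assoc matrix_vector_mult_0_right)

lemma cs_stab: "(S - mat z) *v x \<in> char_subspace S z \<Longrightarrow> x \<in> char_subspace S z"
  for S :: "complex^'n^'n"
  unfolding cs_iff using ker_stab[of "S - mat z" "Suc CARD('n)" x]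
  by (simp add: mv_Suc del: mpow.simps)

lemma neumann_aux:
  fixes n :: "complex^'n^'n"
  assumes a: "a \<noteq> 0"
  shows "n *v (\<Sum>k<m. ((-1)^k / a^(Suc k)) *s (mpow n k *v w))
         + a *s (\<Sum>k<m. ((-1)^k / a^(Suc k)) *s (mpow n k *v w))
       = w - ((-1)^m / a^m) *s (mpow n m *v w)"
proof (induction m)
  case 0 then show ?case by simp
next
  case (Suc m)
  let ?y = "\<Sum>k<m. ((-1)^k / a^(Suc k)) *s (mpow n k *v w)"
  let ?c = "(-1)^m / a^(Suc m)"
  let ?d = "(-1)^m / a^m"
  let ?e = "(-1)^(Suc m) / a^(Suc m)"
  have ac: "a * ?c = ?d" using a by (simp add: field_simps)
  have ce: "?c = - ?e" by simp
  have "n *v (\<Sum>k<Suc m. ((-1)^k / a^(Suc k)) *s (mpow n k *v w))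
        + a *s (\<Sum>k<Suc m. ((-1)^k / a^(Suc k)) *s (mpow n k *v w))
      = (n *v ?y + a *s ?y) + ?c *s (mpow n (Suc m) *v w) + (a * ?c) *s (mpow n m *v w)"
    by (simp add: matrix_vector_right_distrib mv_scale vec.scale_right_distrib matrix_vector_mul_assoc
        vec.scale_scale algebra_simps)
  also have "\<dots> = (w - ?d *s (mpow n m *v w)) + (- ?e) *s (mpow n (Suc m) *v w) + ?d *s (mpow n m *v w)"
    unfolding Suc ac unfolding ce ..
  also have "\<dots> = w - ?e *s (mpow n (Suc m) *v w)"
    by (simp only: vec.scale_minus_left) (simp add: algebra_simps)
  finally show ?case .
qed

lemma neumann:
  fixes S :: "complex^'n^'n"
  assumes "r \<noteq> z" "w \<in> char_subspace S r"
  shows "\<exists>y. y \<in> char_subspace S r \<and> (S - mat z) *v y = w"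
proof -
  define n where "n = S - mat r"
  define a where "a = r - z"
  have a: "a \<noteq> 0" using assms by (simp add: a_def)
  define y where "y = (\<Sum>k<CARD('n). ((-1)^k / a^(Suc k)) *s (mpow n k *v w))"
  have nw: "mpow n CARD('n) *v w = 0" using assms(2) by (simp add: n_def cs_iff)
  have "S - mat z = n + mat a"
    by (simp add: n_def a_def vec_eq_iff mat_def)
  hence "(S - mat z) *v y = n *v y + a *s y"
    by (simp add: matrix_vector_mult_add_rdistrib mat_vec)
  also have "\<dots> = w" unfolding y_def using neumann_aux[OF a, where m="CARD('n)" and w=w and n=n] nw by simp
  finally have "(S - mat z) *v y = w" .
  moreover have "y \<in> char_subspace S r"
    unfolding y_def
  proof (intro cs_sum cs_scale)
    fix k
    have "mpow n k ** S = S ** mpow n k"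
      unfolding n_def by (rule comm_cs_pow') simp
    thus "mpow n k *v w \<in> char_subspace S r" using cs_inv assms(2) by blast
  qed
  ultimately show ?thesis by blast
qed

definition sumspace :: "complex^'n^'n \<Rightarrow> complex set \<Rightarrow> (complex^'n) set" where
  "sumspace S F = {v. \<exists>w. (\<forall>r\<in>F. w r \<in> char_subspace S r) \<and> v = (\<Sum>r\<in>F. w r)}"

lemma decomp_list:
  fixes S :: "complex^'n^'n"
  shows "pev S (\<Prod>z\<leftarrow>zs. [:-z, 1:]) v = 0 \<Longrightarrow> v \<in> sumspace S (set zs)"
proof (induction zs arbitrary: v)
  case Nil then show ?case by (simp add: sumspace_def pev_one)
next
  case (Cons z zs)
  have "(\<Prod>z\<leftarrow>z#zs. [:-z, 1:]) = (\<Prod>z\<leftarrow>zs. [:-z, 1:]) * [:-z, 1:]" by simp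
  hence "pev S (\<Prod>z\<leftarrow>zs. [:-z, 1:]) ((S - mat z) *v v) = 0"
    using Cons.prems by (metis pev_lin_factor)
  then obtain w where w: "\<forall>r\<in>set zs. w r \<in> char_subspace S r" "(S - mat z) *v v = (\<Sum>r\<in>set zs. w r)"
    using Cons.IH unfolding sumspace_def by blast
  have "\<forall>r\<in>set zs - {z}. \<exists>y. y \<in> char_subspace S r \<and> (S - mat z) *v y = w r"
    using neumann w(1) by blast
  then obtain y where y: "\<And>r. r\<in>set zs - {z} \<Longrightarrow> y r \<in> char_subspace S r \<and> (S - mat z) *v y r = w r"
    by metis
  define x where "x = v - (\<Sum>r\<in>set zs - {z}. y r)"
  have "(S - mat z) *v x = (\<Sum>r\<in>set zs. w r) - (\<Sum>r\<in>set zs - {z}. w r)"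
    using y by (simp add: x_def matrix_vector_mult_diff_distrib mv_sum w(2))
  also have "\<dots> = (if z \<in> set zs then w z else 0)"
    by (simp add: sum_diff1)
  finally have "(S - mat z) *v x \<in> char_subspace S z" using w(1) cs_0 by auto
  hence x: "x \<in> char_subspace S z" by (rule cs_stab)
  have "v = x + (\<Sum>r\<in>set zs - {z}. y r)" by (simp add: x_def)
  also have "\<dots> = (\<Sum>r\<in>insert z (set zs). (\<lambda>r. if r = z then x else y r) r)"
    by (subst sum.insert_remove) (auto intro!: sum.cong)
  finally show ?case unfolding sumspace_def using x y
    by (intro CollectI exI[of _ "\<lambda>r. if r = z then x else y r"]) auto
qed

lemma decomp:
  fixes S :: "complex^'n^'n"
  shows "\<exists>F w. finite F \<and> (\<forall>r\<in>F. w r \<in> char_subspace S r) \<and> v = (\<Sum>r\<in>F. w r)"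
proof -
  obtain zs where "pev S (\<Prod>z\<leftarrow>zs. [:-z, 1:]) v = 0" using annihilate by blast
  hence "v \<in> sumspace S (set zs)" by (rule decomp_list)
  thus ?thesis unfolding sumspace_def by blast
qed

lemma G_disjoint:
  fixes S :: "complex^'n^'n"
  shows "r \<noteq> a \<Longrightarrow> w \<in> char_subspace S r \<Longrightarrow> mpow (S - mat a) k *v w = 0 \<Longrightarrow> w = 0"
proof (induction k arbitrary: w)
  case 0 then show ?case by simp
next
  case (Suc k)
  have "(S - mat a) *v w \<in> char_subspace S r"
    by (rule cs_inv[OF _ Suc.prems(2)]) (use comm_sub[of S S a] in simp)
  moreover have "mpow (S - mat a) k *v ((S - mat a) *v w) = 0"
    using Suc.prems(3) by (simp add: mv_Suc del: mpow.simps)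
  ultimately have e: "(S - mat a) *v w = 0" using Suc.IH Suc.prems(1) by blast
  hence e2: "(S - mat r) *v w = (a - r) *s w"
    by (simp add: matrix_vector_mult_diff_rdistrib mat_vec vec.scale_left_diff_distrib)
  have "mpow (S - mat r) j *v w = (a - r)^j *s w" for j
  proof (induction j)
    case 0 show ?case by simp
  next
    case (Suc j)
    have "mpow (S - mat r) (Suc j) *v w = mpow (S - mat r) j *v ((a - r) *s w)"
      by (simp only: mv_Suc e2)
    then show ?case by (simp only: mv_scale Suc.IH vec.scale_scale power_Suc)
  qed
  with Suc.prems(2) have "(a - r)^CARD('n) *s w = 0" by (simp add: cs_iff)
  thus "w = 0" using Suc.prems(1) by (simp add: vec.scale_eq_0_iff)
qed

lemma direct:
  fixes S :: "complex^'n^'n"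
  assumes "finite F" "\<forall>r\<in>F. w r \<in> char_subspace S r" "(\<Sum>r\<in>F. w r) = 0"
  shows "\<forall>r\<in>F. w r = 0"
  using assms
proof (induction F arbitrary: w rule: finite_induct)
  case empty then show ?case by simp
next
  case (insert a F)
  let ?M = "mpow (S - mat a) CARD('n)"
  have wa: "?M *v w a = 0" using insert.prems by (simp add: cs_iff)
  have "0 = ?M *v (\<Sum>r\<in>insert a F. w r)" using insert.prems by simp
  also have "\<dots> = (\<Sum>r\<in>F. ?M *v w r)" using insert.hyps wa by (simp add: mv_sum matrix_vector_right_distrib)
  finally have s: "(\<Sum>r\<in>F. ?M *v w r) = 0" by simp
  have c: "?M ** S = S ** ?M"
    by (rule comm_cs_pow') simp
  have "\<forall>r\<in>F. ?M *v w r \<in> char_subspace S r" using insert.prems cs_inv[OF c] by blast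
  with insert.IH[of "\<lambda>r. ?M *v w r"] s have "\<forall>r\<in>F. ?M *v w r = 0" by blast
  hence F0: "\<forall>r\<in>F. w r = 0" using G_disjoint insert.hyps(2) insert.prems(1) by (metis insertCI)
  hence "w a = 0" using insert.prems(2) insert.hyps by simp
  with F0 show ?case by simp
qed

lemma G_eig_aux:
  fixes S :: "complex^'n^'n"
  shows "mpow (S - mat r) k *v w = 0 \<Longrightarrow> w \<noteq> 0 \<Longrightarrow> r \<in> mat_spectrum S"
proof (induction k arbitrary: w)
  case 0 then show ?case by simp
next
  case (Suc k)
  show ?case
  proof (cases "(S - mat r) *v w = 0")
    case True
    hence "S *v w = r *s w" by (simp add: matrix_vector_mult_diff_rdistrib mat_vec)
    with Suc.prems(2) show ?thesis unfolding mat_spectrum_def by blast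
  next
    case False
    then show ?thesis using Suc.IH Suc.prems(1) by (simp add: mv_Suc del: mpow.simps)
  qed
qed

lemma G_eig: "w \<in> char_subspace S r \<Longrightarrow> w \<noteq> 0 \<Longrightarrow> r \<in> mat_spectrum S"
  using G_eig_aux by (auto simp: cs_iff)

lemma comp_in:
  fixes S R :: "complex^'n^'n"
  assumes "finite F" "\<forall>r\<in>F. w r \<in> char_subspace S r" "v = (\<Sum>r\<in>F. w r)"
    "R ** S = S ** R" "v \<in> char_subspace R \<rho>"
  shows "\<forall>r\<in>F. w r \<in> char_subspace R \<rho>"
proof -
  let ?M = "mpow (R - mat \<rho>) CARD('n)"
  have c: "?M ** S = S ** ?M"
    by (rule comm_cs_pow') (simp add: assms(4))
  have "(\<Sum>r\<in>F. ?M *v w r) = 0" using assms(3,5) by (simp add: mv_sum cs_iff)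
  moreover have "\<forall>r\<in>F. ?M *v w r \<in> char_subspace S r" using assms(2) cs_inv[OF c] by blast
  ultimately have "\<forall>r\<in>F. ?M *v w r = 0"
    using direct[OF assms(1), where w="\<lambda>r. mpow (R - mat \<rho>) CARD('n) *v w r" and S=S] by blast
  thus ?thesis by (simp add: cs_iff)
qed

lemma comm_sum_nil:
  fixes a b :: "complex^'n^'n"
  assumes ab: "a ** b = b ** a"
  shows "mpow a p *v v = 0 \<Longrightarrow> mpow b q *v v = 0 \<Longrightarrow> mpow (a + b) (p + q) *v v = 0"
proof (induction "p + q" arbitrary: p q v)
  case 0 then show ?case by simp
next
  case (Suc n)
  show ?case
  proof (cases "p = 0 \<or> q = 0")
    case True
    with Suc.prems have "v = 0" by auto
    thus ?thesis by simp
  next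
    case False
    then obtain p' q' where pq: "p = Suc p'" "q = Suc q'" by (metis not0_implies_Suc)
    have a1: "mpow a p' *v (a *v v) = 0" using Suc.prems(1) pq by (simp add: mv_Suc del: mpow.simps)
    have a2: "mpow b q *v (a *v v) = 0"
      using comm_mpow[of a b q] ab Suc.prems(2) by (metis comm_vec matrix_vector_mult_0_right)
    have b1: "mpow a p *v (b *v v) = 0"
      using comm_mpow[of b a p] ab Suc.prems(1) by (metis comm_vec matrix_vector_mult_0_right)
    have b2: "mpow b q' *v (b *v v) = 0" using Suc.prems(2) pq by (simp add: mv_Suc del: mpow.simps)
    have "mpow (a + b) n *v (a *v v) = 0" using Suc.hyps(1)[of p' q] a1 a2 Suc.hyps(2) pq by simp
    moreover have "mpow (a + b) n *v (b *v v) = 0" using Suc.hyps(1)[of p q'] b1 b2 Suc.hyps(2) pq by simp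
    moreover have "mpow (a + b) (p + q) *v v = mpow (a + b) n *v ((a + b) *v v)"
      using Suc.hyps(2) by (metis mv_Suc)
    moreover have "\<dots> = mpow (a + b) n *v (a *v v) + mpow (a + b) n *v (b *v v)"
      by (simp add: matrix_vector_mult_add_rdistrib matrix_vector_right_distrib)
    ultimately show ?thesis by simp
  qed
qed

lemma joint_in_prod:
  fixes X Y :: "complex^'n^'n"
  assumes XY: "X ** Y = Y ** X" and v: "v \<in> char_subspace X c" "v \<in> char_subspace Y m"
  shows "v \<in> char_subspace (X ** Y) (c * m)"
proof -
  define a where "a = (X - mat c) ** Y"
  define b where "b = mat c ** (Y - mat m)"
  have h1: "Y ** (X - mat c) = (X - mat c) ** Y" by (rule comm_sub) (simp add: XY)
  have h2: "X ** (Y - mat m) = (Y - mat m) ** X" by (rule comm_sub) (simp add: XY)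
  have h3: "(Y - mat m) ** (X - mat c) = (X - mat c) ** (Y - mat m)" by (rule comm_sub) (simp add: h2)
  have h4: "Y ** (Y - mat m) = (Y - mat m) ** Y" by (rule comm_sub) simp
  have ab: "a ** b = b ** a" unfolding a_def b_def
    by (rule comm4) (simp_all only: mat_comm[symmetric] h3[symmetric] h4)
  have "mpow a CARD('n) *v v = 0"
  proof -
    have g: "Y ** mpow (X - mat c) CARD('n) = mpow (X - mat c) CARD('n) ** Y"
      by (rule comm_mpow) (rule h1)
    have g2: "mpow (X - mat c) CARD('n) ** mpow Y CARD('n) = mpow Y CARD('n) ** mpow (X - mat c) CARD('n)"
      by (rule comm_mpow) (rule g[symmetric])
    have "mpow a CARD('n) = mpow Y CARD('n) ** mpow (X - mat c) CARD('n)"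
      unfolding a_def using mpow_mult_comm[OF h1[symmetric]] g2 by simp
    thus ?thesis using v(1) by (simp add: cs_iff flip: matrix_vector_mul_assoc)
  qed
  moreover have "mpow b CARD('n) *v v = 0"
  proof -
    have "mpow b CARD('n) = mpow (mat c) CARD('n) ** mpow (Y - mat m) CARD('n)"
      unfolding b_def by (rule mpow_mult_comm) (rule mat_comm)
    thus ?thesis using v(2) by (simp add: cs_iff flip: matrix_vector_mul_assoc)
  qed
  ultimately have "mpow (a + b) (CARD('n) + CARD('n)) *v v = 0" by (rule comm_sum_nil[OF ab])
  moreover have "a + b = X ** Y - mat (c * m)"
    by (simp add: a_def b_def matrix_sub_ldistrib matrix_sub_rdistrib mat_mult_mat)
  ultimately show ?thesis using ker_stab by (auto simp: cs_iff)
qed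




lemma key:
  fixes X Y :: "complex^'n^'n"
  assumes XY: "X ** Y = Y ** X"
    and inj: "inj_on (\<lambda>(x, y). x * y) (mat_spectrum X \<times> mat_spectrum Y)"
    and c: "c \<in> mat_spectrum X" and m: "m \<in> mat_spectrum Y"
    and w: "w \<in> char_subspace (X ** Y) (c * m)"
  shows "w \<in> char_subspace X c"
proof -
  have PX: "(X ** Y) ** X = X ** (X ** Y)" by (metis XY matrix_mul_assoc)
  have PY: "(X ** Y) ** Y = Y ** (X ** Y)" by (metis XY matrix_mul_assoc)
  obtain F u where F: "finite F" "\<forall>l\<in>F. u l \<in> char_subspace X l" "w = (\<Sum>l\<in>F. u l)"
    using decomp[of X w] by blast
  have uP: "\<forall>l\<in>F. u l \<in> char_subspace (X ** Y) (c * m)"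
    using comp_in[OF F PX w] .
  have "u l = 0" if l: "l \<in> F" "l \<noteq> c" for l
  proof -
    obtain G t where G: "finite G" "\<forall>r\<in>G. t r \<in> char_subspace Y r" "u l = (\<Sum>r\<in>G. t r)"
      using decomp[of Y "u l"] by blast
    have tX: "\<forall>r\<in>G. t r \<in> char_subspace X l" using comp_in[OF G XY] F(2) l(1) by blast
    have tP: "\<forall>r\<in>G. t r \<in> char_subspace (X ** Y) (c * m)" using comp_in[OF G PY] uP l(1) by blast
    have "t r = 0" if r: "r \<in> G" for r
    proof (rule ccontr)
      assume nz: "t r \<noteq> 0"
      have lX: "l \<in> mat_spectrum X" using G_eig tX r nz by blast
      have rY: "r \<in> mat_spectrum Y" using G_eig G(2) r nz by blast
      have tr: "t r \<in> char_subspace (X ** Y) (l * r)" using joint_in_prod[OF XY] tX G(2) r by blast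
      have "l * r = c * m"
      proof (rule ccontr)
        assume "l * r \<noteq> c * m"
        moreover have "mpow (X ** Y - mat (c * m)) CARD('n) *v t r = 0" using tP r by (simp add: cs_iff)
        ultimately have "t r = 0" using G_disjoint tr by blast
        thus False using nz by simp
      qed
      hence "(l, r) = (c, m)" using inj lX rY c m unfolding inj_on_def by auto
      thus False using l(2) by simp
    qed
    thus ?thesis using G(3) by simp
  qed
  hence "\<forall>l\<in>F. u l \<in> char_subspace X c" using F(2) cs_0 by metis
  thus ?thesis using F(3) cs_sum by metis
qed

lemma core:
  fixes X Y A B :: "complex^'n^'n"
  assumes XY: "X ** Y = Y ** X" and AX: "A ** X = X ** A"
    and P: "(A + B) ** (X ** Y) = (X ** Y) ** (A + B)"
    and inj: "inj_on (\<lambda>(x, y). x * y) (mat_spectrum X \<times> mat_spectrum Y)"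
    and v: "v \<in> char_subspace X c"
  shows "B *v v \<in> char_subspace X c"
proof -
  obtain F u where F: "finite F" "\<forall>m\<in>F. u m \<in> char_subspace Y m" "v = (\<Sum>m\<in>F. u m)"
    using decomp[of Y v] by blast
  have uX: "\<forall>m\<in>F. u m \<in> char_subspace X c" using comp_in[OF F XY v] .
  have "B *v u m \<in> char_subspace X c" if m: "m \<in> F" for m
  proof (cases "u m = 0")
    case True then show ?thesis by (simp add: cs_0)
  next
    case False
    have c: "c \<in> mat_spectrum X" using G_eig uX m False by blast
    have mY: "m \<in> mat_spectrum Y" using G_eig F(2) m False by blast
    have "u m \<in> char_subspace (X ** Y) (c * m)" using joint_in_prod[OF XY] uX F(2) m by blast
    hence "(A + B) *v u m \<in> char_subspace (X ** Y) (c * m)" by (rule cs_inv[OF P])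
    hence "(A + B) *v u m \<in> char_subspace X c" by (rule key[OF XY inj c mY])
    moreover have "A *v u m \<in> char_subspace X c" using cs_inv[OF AX] uX m by blast
    ultimately have "(A + B) *v u m - A *v u m \<in> char_subspace X c" by (rule cs_diff)
    thus ?thesis by (simp add: matrix_vector_mult_add_rdistrib)
  qed
  thus ?thesis using F(3) by (simp add: mv_sum cs_sum)
qed




lemma mm_scaleR_right: "(A::complex^'n^'n) ** (c *\<^sub>R B) = c *\<^sub>R (A ** B)"
  by (simp add: vec_eq_iff matrix_matrix_mult_def scaleR_sum_right)

lemma mm_scaleR_left: "(c *\<^sub>R A) ** (B::complex^'n^'n) = c *\<^sub>R (A ** B)"
  by (simp add: vec_eq_iff matrix_matrix_mult_def scaleR_sum_right)

lemma bb: "bounded_bilinear ((**) :: complex^'n^'n \<Rightarrow> complex^'n^'n \<Rightarrow> complex^'n^'n)"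
  unfolding bilinear_conv_bounded_bilinear[symmetric] bilinear_def
  by (auto intro!: linearI simp: matrix_add_ldistrib matrix_add_rdistrib' mm_scaleR_right mm_scaleR_left)

lemma mpow_norm:
  fixes M :: "complex^'n^'n"
  assumes K: "\<And>(a::complex^'n^'n) (b::complex^'n^'n). norm (a ** b) \<le> norm a * norm b * K" "K > 0"
  shows "norm (mpow M k) \<le> norm (mat 1 :: complex^'n^'n) * (K * norm M)^k"
proof (induction k)
  case 0 show ?case by simp
next
  case (Suc k)
  have "norm (mpow M (Suc k)) \<le> norm M * norm (mpow M k) * K" using K(1)[where a=M and b="mpow M k"] by simp
  also have "\<dots> \<le> norm M * (norm (mat 1 :: complex^'n^'n) * (K * norm M)^k) * K"
    using Suc K(2) by (intro mult_right_mono[OF mult_left_mono[OF Suc]]) auto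
  also have "\<dots> = norm (mat 1 :: complex^'n^'n) * (K * norm M)^Suc k" by (simp only: power_Suc mult_ac)
  finally show ?case .
qed

lemma exp_summable:
  fixes M :: "complex^'n^'n"
  shows "summable (\<lambda>k. norm ((1 / fact k) *\<^sub>R mpow M k))"
proof -
  obtain K where K0: "K > 0" and K2: "\<forall>(a::complex^'n^'n) (b::complex^'n^'n). norm (a ** b) \<le> norm a * norm b * K"
    using bounded_bilinear.pos_bounded[OF bb] by auto
  note K = K0 K2[rule_format]
  have s: "summable (\<lambda>k. norm (mat 1 :: complex^'n^'n) * (inverse (fact k) * (K * norm M)^k))"
    by (intro summable_mult summable_exp)
  show ?thesis
  proof (rule summable_comparison_test[OF _ s])
    show "\<exists>N. \<forall>n\<ge>N. norm (norm ((1 / fact n) *\<^sub>R mpow M n))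
             \<le> norm (mat 1 :: complex^'n^'n) * (inverse (fact n) * (K * norm M)^n)"
    proof (intro exI allI impI)
      fix n :: nat
      have "norm (norm ((1 / fact n) *\<^sub>R mpow M n)) = inverse (fact n) * norm (mpow M n)"
        by (simp add: divide_inverse)
      also have "\<dots> \<le> inverse (fact n) * (norm (mat 1 :: complex^'n^'n) * (K * norm M)^n)"
        using mpow_norm[OF K(2) K(1), of M n] by (intro mult_left_mono) auto
      finally show "norm (norm ((1 / fact n) *\<^sub>R mpow M n))
             \<le> norm (mat 1 :: complex^'n^'n) * (inverse (fact n) * (K * norm M)^n)"
        by (simp add: mult_ac)
    qed
  qed
qed

lemma exp_summable': "summable (\<lambda>k. (1 / fact k) *\<^sub>R mpow (M::complex^'n^'n) k)"
  by (rule summable_norm_cancel[OF exp_summable])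

lemma exp_comm: "M ** mat_exp M = mat_exp M ** (M::complex^'n^'n)"
proof -
  have "M ** mat_exp M = (\<Sum>k. M ** ((1 / fact k) *\<^sub>R mpow M k))"
    unfolding mat_exp_def by (rule bounded_linear.suminf[OF bounded_bilinear.bounded_linear_right[OF bb] exp_summable'])
  also have "\<dots> = (\<Sum>k. ((1 / fact k) *\<^sub>R mpow M k) ** M)"
    by (simp add: mm_scaleR_right mm_scaleR_left comm_mpow[of M M])
  also have "\<dots> = mat_exp M ** M"
    unfolding mat_exp_def by (rule bounded_linear.suminf[OF bounded_bilinear.bounded_linear_left[OF bb] exp_summable', symmetric])
  finally show ?thesis .
qed

lemma bb_Cauchy_product_sums:
  fixes a :: "nat \<Rightarrow> 'a::banach" and b :: "nat \<Rightarrow> 'b::banach" and prod :: "'a \<Rightarrow> 'b \<Rightarrow> 'c::banach"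
  assumes bb: "bounded_bilinear prod"
    and a: "summable (\<lambda>k. norm (a k))"
    and b: "summable (\<lambda>k. norm (b k))"
  shows "(\<lambda>k. \<Sum>i\<le>k. prod (a i) (b (k - i))) sums (prod (\<Sum>k. a k) (\<Sum>k. b k))"
proof -
  obtain K where K0: "K > 0" and K2: "\<forall>x y. norm (prod x y) \<le> norm x * norm y * K"
    using bounded_bilinear.pos_bounded[OF bb] by auto
  note K = K0 K2[rule_format]
  let ?S1 = "\<lambda>n::nat. {..<n} \<times> {..<n}"
  let ?S2 = "\<lambda>n::nat. {(i,j). i + j < n}"
  have S1_mono: "\<And>m n. m \<le> n \<Longrightarrow> ?S1 m \<subseteq> ?S1 n" by auto
  have S2_le_S1: "\<And>n. ?S2 n \<subseteq> ?S1 n" by auto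
  have S1_le_S2: "\<And>n. ?S1 (n div 2) \<subseteq> ?S2 n" by auto
  have finite_S1: "\<And>n. finite (?S1 n)" by simp
  with S2_le_S1 have finite_S2: "\<And>n. finite (?S2 n)" by (rule finite_subset)

  let ?g = "\<lambda>(i,j). prod (a i) (b j)"
  let ?f = "\<lambda>(i,j). norm (a i) * norm (b j) * K"
  have f_nonneg: "\<And>x. 0 \<le> ?f x" using K by auto
  then have norm_sum_f: "\<And>A. norm (sum ?f A) = sum ?f A"
    unfolding real_norm_def
    by (simp only: abs_of_nonneg sum_nonneg [rule_format])

  have "(\<lambda>n. prod (\<Sum>k<n. a k) (\<Sum>k<n. b k)) \<longlonglongrightarrow> prod (\<Sum>k. a k) (\<Sum>k. b k)"
    by (intro bounded_bilinear.tendsto[OF bb] summable_LIMSEQ summable_norm_cancel [OF a] summable_norm_cancel [OF b])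
  moreover have "prod (\<Sum>k<n. a k) (\<Sum>k<n. b k) = sum ?g (?S1 n)" for n
  proof -
    have "prod (\<Sum>k<n. a k) (\<Sum>k<n. b k) = (\<Sum>i<n. prod (a i) (\<Sum>k<n. b k))"
      by (rule bounded_bilinear.sum_left[OF bb])
    also have "\<dots> = (\<Sum>i<n. \<Sum>j<n. prod (a i) (b j))"
      by (simp add: bounded_bilinear.sum_right[OF bb])
    also have "\<dots> = sum ?g (?S1 n)" by (simp add: sum.cartesian_product)
    finally show ?thesis .
  qed
  ultimately have 1: "(\<lambda>n. sum ?g (?S1 n)) \<longlonglongrightarrow> prod (\<Sum>k. a k) (\<Sum>k. b k)"
    by simp

  have "(\<lambda>n. (\<Sum>k<n. norm (a k)) * (\<Sum>k<n. norm (b k)) * K) \<longlonglongrightarrow> (\<Sum>k. norm (a k)) * (\<Sum>k. norm (b k)) * K"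
    using a b by (intro tendsto_mult tendsto_const summable_LIMSEQ)
  moreover have "(\<Sum>k<n. norm (a k)) * (\<Sum>k<n. norm (b k)) * K = sum ?f (?S1 n)" for n
  proof -
    have "(\<Sum>k<n. norm (a k)) * (\<Sum>k<n. norm (b k)) = (\<Sum>(i,j)\<in>?S1 n. norm (a i) * norm (b j))"
      by (simp add: sum_product sum.cartesian_product)
    moreover have "(\<Sum>(i,j)\<in>?S1 n. norm (a i) * norm (b j)) * K = sum ?f (?S1 n)"
      by (subst sum_distrib_right) (simp add: split_def)
    ultimately show ?thesis by simp
  qed
  ultimately have "(\<lambda>n. sum ?f (?S1 n)) \<longlonglongrightarrow> (\<Sum>k. norm (a k)) * (\<Sum>k. norm (b k)) * K"
    by simp
  then have "convergent (\<lambda>n. sum ?f (?S1 n))"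
    by (rule convergentI)
  then have Cauchy: "Cauchy (\<lambda>n. sum ?f (?S1 n))"
    by (rule convergent_Cauchy)
  have "Zfun (\<lambda>n. sum ?f (?S1 n - ?S2 n)) sequentially"
  proof (rule ZfunI, simp only: eventually_sequentially norm_sum_f)
    fix r :: real
    assume r: "0 < r"
    from CauchyD [OF Cauchy r] obtain N
      where "\<forall>m\<ge>N. \<forall>n\<ge>N. norm (sum ?f (?S1 m) - sum ?f (?S1 n)) < r" ..
    then have "\<And>m n. N \<le> n \<Longrightarrow> n \<le> m \<Longrightarrow> norm (sum ?f (?S1 m - ?S1 n)) < r"
      by (simp only: sum_diff finite_S1 S1_mono)
    then have N: "\<And>m n. N \<le> n \<Longrightarrow> n \<le> m \<Longrightarrow> sum ?f (?S1 m - ?S1 n) < r"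
      by (simp only: norm_sum_f)
    show "\<exists>N. \<forall>n\<ge>N. sum ?f (?S1 n - ?S2 n) < r"
    proof (intro exI allI impI)
      fix n
      assume "2 * N \<le> n"
      then have n: "N \<le> n div 2" by simp
      have "sum ?f (?S1 n - ?S2 n) \<le> sum ?f (?S1 n - ?S1 (n div 2))"
        by (intro sum_mono2 finite_Diff finite_S1 f_nonneg Diff_mono subset_refl S1_le_S2)
      also have "\<dots> < r"
        using n div_le_dividend by (rule N)
      finally show "sum ?f (?S1 n - ?S2 n) < r" .
    qed
  qed
  then have "Zfun (\<lambda>n. sum ?g (?S1 n - ?S2 n)) sequentially"
    apply (rule Zfun_le [rule_format])
    apply (simp only: norm_sum_f)
    apply (rule order_trans [OF norm_sum sum_mono])
    apply (auto simp add: K(2))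
    done
  then have 2: "(\<lambda>n. sum ?g (?S1 n) - sum ?g (?S2 n)) \<longlonglongrightarrow> 0"
    unfolding tendsto_Zfun_iff diff_0_right
    by (simp only: sum_diff finite_S1 S2_le_S1)
  with 1 have "(\<lambda>n. sum ?g (?S2 n)) \<longlonglongrightarrow> prod (\<Sum>k. a k) (\<Sum>k. b k)"
    by (rule Lim_transform2)
  then show ?thesis
    by (simp only: sums_def sum.triangle_reindex)
qed




lemma mpow_neg: "mpow (- M) j = (-1)^j *\<^sub>R mpow (M::complex^'n^'n) j"
proof (induction j)
  case 0 show ?case by simp
next
  case (Suc j)
  have "- M = (-1) *\<^sub>R M" by simp
  then show ?case using Suc by (simp only: mpow.simps mm_scaleR_left mm_scaleR_right scaleR_scaleR power_Suc mult.commute)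
qed

lemma exp_inv2: "mat_exp M ** mat_exp (- M) = (mat 1 :: complex^'n^'n)"
proof -
  have cp: "(\<lambda>k. \<Sum>i\<le>k. ((1 / fact i) *\<^sub>R mpow M i) ** ((1 / fact (k - i)) *\<^sub>R mpow (- M) (k - i)))
        sums (mat_exp M ** mat_exp (- M))"
    unfolding mat_exp_def by (rule bb_Cauchy_product_sums[OF bb exp_summable exp_summable])
  have termk: "(\<Sum>i\<le>k. ((1 / fact i) *\<^sub>R mpow M i) ** ((1 / fact (k - i)) *\<^sub>R mpow (- M) (k - i)))
        = (if k = 0 then mat 1 else 0)" for k
  proof -
    have "(\<Sum>i\<le>k. ((1 / fact i) *\<^sub>R mpow M i) ** ((1 / fact (k - i)) *\<^sub>R mpow (- M) (k - i)))
        = (\<Sum>i\<le>k. (real (k choose i) * 1^i * (-1)^(k - i) / fact k) *\<^sub>R mpow M k)"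
    proof (rule sum.cong[OF refl])
      fix i assume i: "i \<in> {..k}"
      have mp: "mpow M i ** mpow M (k - i) = mpow M k" using i mpow_add[of M i "k - i"] by simp
      have bf: "real (k choose i) = fact k / (fact i * fact (k - i))" using i binomial_fact[of i k] by simp
      have sc: "1 / fact i * (1 / fact (k - i) * (-1)^(k - i)) = real (k choose i) * 1^i * (-1)^(k - i) / (fact k :: real)"
        unfolding bf by (simp add: field_simps)
      have "((1 / fact i) *\<^sub>R mpow M i) ** ((1 / fact (k - i)) *\<^sub>R mpow (- M) (k - i))
          = (1 / fact i * (1 / fact (k - i) * (-1)^(k - i))) *\<^sub>R (mpow M i ** mpow M (k - i))"
        by (simp only: mpow_neg mm_scaleR_left mm_scaleR_right scaleR_scaleR) (simp add: mult_ac)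
      also have "\<dots> = (real (k choose i) * 1^i * (-1)^(k - i) / fact k) *\<^sub>R mpow M k"
        by (simp only: mp sc)
      finally show "((1 / fact i) *\<^sub>R mpow M i) ** ((1 / fact (k - i)) *\<^sub>R mpow (- M) (k - i))
          = (real (k choose i) * 1^i * (-1)^(k - i) / fact k) *\<^sub>R mpow M k" .
    qed
    also have "\<dots> = ((\<Sum>i\<le>k. real (k choose i) * 1^i * (-1)^(k - i)) / fact k) *\<^sub>R mpow M k"
      by (simp only: sum_divide_distrib scaleR_sum_left)
    also have "(\<Sum>i\<le>k. real (k choose i) * 1^i * (-1)^(k - i)) = (1 + (-1))^k"
      by (rule binomial_ring[symmetric])
    also have "((1 + (-1::real))^k / fact k) *\<^sub>R mpow M k = (if k = 0 then mat 1 else 0)"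
      by (cases k) simp_all
    finally show ?thesis .
  qed
  have eq: "(\<lambda>k. \<Sum>i\<le>k. ((1 / fact i) *\<^sub>R mpow M i) ** ((1 / fact (k - i)) *\<^sub>R mpow (- M) (k - i)))
      = (\<lambda>k. if k = 0 then mat 1 else 0)"
    by (rule ext) (rule termk)
  have s1: "(\<lambda>k. if k = 0 then mat 1 else (0::complex^'n^'n)) sums (mat_exp M ** mat_exp (- M))"
    using cp unfolding eq .
  have s2: "(\<lambda>k. if k = 0 then mat 1 else (0::complex^'n^'n)) sums mat 1"
    using sums_single[of 0 "\<lambda>_. mat 1 :: complex^'n^'n"] by simp
  show ?thesis using sums_unique2[OF s1 s2] .
qed

lemma exp_inv1: "mat_exp (- M) ** mat_exp M = (mat 1 :: complex^'n^'n)"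
  using exp_inv2[of "- M"] by simp




theorem mainTheorem10:
  fixes A B :: "complex^'n^'n"
  assumes inj: "inj_on (\<lambda>(x, y). x * y) (mat_spectrum (mat_exp A) \<times> mat_spectrum (mat_exp B))"
    and cond: "(\<forall>k l :: int. mat_exp (of_int k *\<^sub>R A + of_int l *\<^sub>R B)
                  = mat_exp (of_int k *\<^sub>R A) ** mat_exp (of_int l *\<^sub>R B))
             \<or> (\<forall>k :: nat. mat_exp (real k *\<^sub>R A + B) = mat_exp (real k *\<^sub>R A) ** mat_exp B
                  \<and> mat_exp (real k *\<^sub>R A) ** mat_exp B = mat_exp B ** mat_exp (real k *\<^sub>R A))"
  shows "(\<forall>c. \<forall>v \<in> char_subspace (mat_exp A) c.
            A *v v \<in> char_subspace (mat_exp A) c \<and> B *v v \<in> char_subspace (mat_exp A) c)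
       \<and> (\<forall>c. \<forall>v \<in> char_subspace (mat_exp B) c.
            A *v v \<in> char_subspace (mat_exp B) c \<and> B *v v \<in> char_subspace (mat_exp B) c)"
proof -
  define X where "X = mat_exp A"
  define Y where "Y = mat_exp B"
  define P where "P = mat_exp (A + B)"
  have facts: "P = X ** Y \<and> X ** Y = Y ** X"
    using cond
  proof
    assume h: "\<forall>k l :: int. mat_exp (of_int k *\<^sub>R A + of_int l *\<^sub>R B)
                  = mat_exp (of_int k *\<^sub>R A) ** mat_exp (of_int l *\<^sub>R B)"
    have 1: "P = X ** Y" using h[rule_format, of 1 1] by (simp add: X_def Y_def P_def)
    have 2: "mat_exp (- (A + B)) = mat_exp (- A) ** mat_exp (- B)"
      using h[rule_format, of "-1" "-1"] by (simp add: algebra_simps)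
    have "Y ** X = Y ** X ** mat 1" by simp
    also have "\<dots> = Y ** X ** (mat_exp (- (A + B)) ** P)" by (simp only: P_def exp_inv1)
    also have "\<dots> = Y ** (X ** mat_exp (- A)) ** mat_exp (- B) ** P" by (simp only: 2 matrix_mul_assoc)
    also have "\<dots> = Y ** mat_exp (- B) ** P" by (simp add: X_def exp_inv2)
    also have "\<dots> = P" by (simp add: Y_def exp_inv2)
    finally show ?thesis using 1 by simp
  next
    assume h: "\<forall>k :: nat. mat_exp (real k *\<^sub>R A + B) = mat_exp (real k *\<^sub>R A) ** mat_exp B
                  \<and> mat_exp (real k *\<^sub>R A) ** mat_exp B = mat_exp B ** mat_exp (real k *\<^sub>R A)"
    show ?thesis using h[rule_format, of 1] by (simp add: X_def Y_def P_def)
  qed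
  have XY: "X ** Y = Y ** X" using facts by simp
  have AX: "A ** X = X ** A" unfolding X_def by (rule exp_comm)
  have BY: "B ** Y = Y ** B" unfolding Y_def by (rule exp_comm)
  have ABP: "(A + B) ** (X ** Y) = (X ** Y) ** (A + B)"
    using exp_comm[of "A + B"] facts by (simp add: P_def)
  have BAP: "(B + A) ** (Y ** X) = (Y ** X) ** (B + A)"
    using ABP XY by (simp add: add.commute)
  have inj': "inj_on (\<lambda>(x, y). x * y) (mat_spectrum Y \<times> mat_spectrum X)"
    using inj unfolding inj_on_def X_def Y_def by (auto simp: mult.commute)
  have injX: "inj_on (\<lambda>(x, y). x * y) (mat_spectrum X \<times> mat_spectrum Y)"
    using inj unfolding X_def Y_def .
  show ?thesis
    unfolding X_def[symmetric] Y_def[symmetric]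
  proof (intro conjI allI ballI)
    fix c v assume v: "v \<in> char_subspace X c"
    show "A *v v \<in> char_subspace X c" by (rule cs_inv[OF AX v])
    show "B *v v \<in> char_subspace X c" by (rule core[OF XY AX ABP injX v])
  next
    fix c v assume v: "v \<in> char_subspace Y c"
    show "B *v v \<in> char_subspace Y c" by (rule cs_inv[OF BY v])
    show "A *v v \<in> char_subspace Y c" by (rule core[OF XY[symmetric] BY BAP inj' v])
  qed
qed


end
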